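(* Assume the demand is i.i.d. with pmf $P_X$ (so $Q(x'\mid x)=P_X(x')$). Given $a\in\mathcal A$ and $\pi\in\mathcal P_{X,S}$, define $\xi(w)=\sum_{(x,s):s-x=w}\pi(x,s)$ for $w\in\mathcal W$, $b(y\mid w)=\frac{\sum_{(x,s):s-x=w}a(y\mid x,s)\pi(x,s)}{\xi(w)}$, and $\tilde a(y\mid x,s)=b(y\mid s-x)$. Then $b\in\mathcal B$, $\tilde a\in\mathcal A$, and (1) for every $y\in\mathcal Y$, $\varphi(\pi,y,a)=\varphi(\pi,y,\tilde a)$; (2) $I(a;\pi)\ge I(\tilde a;\pi)=I(b;\xi)$. Consequently, in the sequential decision problem there is no loss of optimality in restricting attention to actions of the form $\tilde a(y\mid x,s)=b(y\mid s-x)$ with $b\in\mathcal B$.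
   Context: $\mathcal X=\{0,\dots,m_x\}$, $\mathcal Y=\{0,\dots,m_y\}$, $\mathcal S=\{0,\dots,m_s\}$ with $m_x\le m_y$; $\mathcal W=\{s-x:s\in\mathcal S,x\in\mathcal X\}$; $\mathcal Y_\circ(w)=\{y\in\mathcal Y:w+y\in\mathcal S\}$; $\mathcal P_{X,S}$ the pmfs on $\mathcal X\times\mathcal S$. $\mathcal A$: conditional pmfs $a(y\mid x,s)$ with $a(\mathcal Y_\circ(s-x)\mid x,s)=1$. $\mathcal B$: conditional pmfs $b(y\mid w)$ with $b(\mathcal Y_\circ(w)\mid w)=1$; when $\xi(w)=0$, $b(\cdot\mid w)$ is taken to be an arbitrary pmf on $\mathcal Y_\circ(w)$. $I(a;\pi)$ is the mutual information between $(X,S)\sim\pi$ and $Y\sim a(\cdot\mid X,S)$; $I(b;\xi)$ is the mutual information between $W\sim\xi$ and $Y\sim b(\cdot\mid W)$. The filter is $\varphi(\pi,y,a)(x',s')=\frac{\sum_xQ(x'|x)a(y|x,s'+x-y)\pi(x,s'+x-y)}{\sum_{x,s}a(y|x,s)\pi(x,s)}$, i.e. the conditional pmf of $(X_+,S_+)$ given $Y=y$ when $(X,S)\sim\pi$, $Y\sim a(\cdot\mid X,S)$, $S_+=S+Y-X$, $X_+\sim Q(\cdot\mid X)$. The sequential problem: actions $A_t\in\mathcal A$ chosen from $(Y^{t-1},A^{t-1})$, $Y_t\sim A_t(\cdot\mid X_t,S_t)$, $S_{t+1}=S_t+Y_t-X_t$, cost $\frac1T\mathbb E[\sum_tI(A_t;\Pi_t)]$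 with $\Pi_t$ the belief on $(X_t,S_t)$. *)

theory Defs
  imports Complex_Main
begin

text \<open>Alphabets: {0..m} as sets of integers (so that s - x and s' + x - y make sense).\<close>
definition rng :: "nat \<Rightarrow> int set" where
  "rng m = {0..int m}"

definition Wset :: "nat \<Rightarrow> nat \<Rightarrow> int set" where
  "Wset mx ms = {s - x | s x. s \<in> rng ms \<and> x \<in> rng mx}"

definition Yo :: "nat \<Rightarrow> nat \<Rightarrow> int \<Rightarrow> int set" where
  "Yo my ms w = {y \<in> rng my. w + y \<in> rng ms}"

definition is_pmf_on :: "'u set \<Rightarrow> ('u \<Rightarrow> real) \<Rightarrow> bool" where
  "is_pmf_on U p \<longleftrightarrow> (\<forall>u. 0 \<le> p u) \<and> (\<forall>u. u \<notin> U \<longrightarrow> p u = 0) \<and> sum p U = 1"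

definition is_pmf_XS :: "nat \<Rightarrow> nat \<Rightarrow> (int \<Rightarrow> int \<Rightarrow> real) \<Rightarrow> bool" where
  "is_pmf_XS mx ms \<pi> = is_pmf_on (rng mx \<times> rng ms) (\<lambda>(x,s). \<pi> x s)"

text \<open>Action set A: a y x s = a(y|x,s).\<close>
definition actA :: "nat \<Rightarrow> nat \<Rightarrow> nat \<Rightarrow> (int \<Rightarrow> int \<Rightarrow> int \<Rightarrow> real) \<Rightarrow> bool" where
  "actA mx my ms a \<longleftrightarrow>
     (\<forall>x\<in>rng mx. \<forall>s\<in>rng ms. is_pmf_on (Yo my ms (s - x)) (\<lambda>y. a y x s))"

definition actB :: "nat \<Rightarrow> nat \<Rightarrow> nat \<Rightarrow> (int \<Rightarrow> int \<Rightarrow> real) \<Rightarrow> bool" where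
  "actB mx my ms b \<longleftrightarrow> (\<forall>w\<in>Wset mx ms. is_pmf_on (Yo my ms w) (\<lambda>y. b y w))"

definition xi :: "nat \<Rightarrow> nat \<Rightarrow> (int \<Rightarrow> int \<Rightarrow> real) \<Rightarrow> int \<Rightarrow> real" where
  "xi mx ms \<pi> w = (\<Sum>x\<in>rng mx. \<Sum>s\<in>rng ms. if s - x = w then \<pi> x s else 0)"

definition mutual_info :: "'u set \<Rightarrow> 'v set \<Rightarrow> ('u \<Rightarrow> 'v \<Rightarrow> real) \<Rightarrow> real" where
  "mutual_info U V J =
     (\<Sum>u\<in>U. \<Sum>v\<in>V. if J u v = 0 then 0
        else J u v * ln (J u v / ((\<Sum>v'\<in>V. J u v') * (\<Sum>u'\<in>U. J u' v))))"

definition MI_A :: "nat \<Rightarrow> nat \<Rightarrow> nat \<Rightarrow> (int \<Rightarrow> int \<Rightarrow> int \<Rightarrow> real) \<Rightarrow> (int \<Rightarrow> int \<Rightarrow> real) \<Rightarrow> real" where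
  "MI_A mx my ms a \<pi> = mutual_info (rng mx \<times> rng ms) (rng my) (\<lambda>(x,s) y. \<pi> x s * a y x s)"

definition MI_B :: "nat \<Rightarrow> nat \<Rightarrow> nat \<Rightarrow> (int \<Rightarrow> int \<Rightarrow> real) \<Rightarrow> (int \<Rightarrow> real) \<Rightarrow> real" where
  "MI_B mx my ms b \<xi> = mutual_info (Wset mx ms) (rng my) (\<lambda>w y. \<xi> w * b y w)"

definition filt :: "nat \<Rightarrow> nat \<Rightarrow> (int \<Rightarrow> int \<Rightarrow> real) \<Rightarrow> (int \<Rightarrow> int \<Rightarrow> real) \<Rightarrow> int
     \<Rightarrow> (int \<Rightarrow> int \<Rightarrow> int \<Rightarrow> real) \<Rightarrow> (int \<Rightarrow> int \<Rightarrow> real)" where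
  "filt mx ms Q \<pi> y a = (\<lambda>x' s'.
     (\<Sum>x\<in>rng mx. Q x' x * a y x (s' + x - y) * \<pi> x (s' + x - y)) /
     (\<Sum>x\<in>rng mx. \<Sum>s\<in>rng ms. a y x s * \<pi> x s))"

text \<open>Expected accumulated cost of a (deterministic, history-dependent) policy sigma over
  n remaining steps, from observation history h and current belief pi:
  the action at history h is sigma h, Y is drawn with probability sum_{x,s} a(y|x,s) pi(x,s),
  and the belief is updated by the filter.\<close>
fun seq_cost :: "nat \<Rightarrow> nat \<Rightarrow> nat \<Rightarrow> (int \<Rightarrow> int \<Rightarrow> real) \<Rightarrow>
     (int list \<Rightarrow> (int \<Rightarrow> int \<Rightarrow> int \<Rightarrow> real)) \<Rightarrow> nat \<Rightarrow> int list \<Rightarrow> (int \<Rightarrow> int \<Rightarrow> real) \<Rightarrow> real" where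
  "seq_cost mx my ms Q \<sigma> 0 h \<pi> = 0"
| "seq_cost mx my ms Q \<sigma> (Suc n) h \<pi> =
     MI_A mx my ms (\<sigma> h) \<pi> +
     (\<Sum>y\<in>rng my. (\<Sum>x\<in>rng mx. \<Sum>s\<in>rng ms. \<sigma> h y x s * \<pi> x s) *
        seq_cost mx my ms Q \<sigma> n (h @ [y]) (filt mx ms Q \<pi> y (\<sigma> h)))"

definition avg_cost :: "nat \<Rightarrow> nat \<Rightarrow> nat \<Rightarrow> (int \<Rightarrow> int \<Rightarrow> real) \<Rightarrow>
     (int list \<Rightarrow> (int \<Rightarrow> int \<Rightarrow> int \<Rightarrow> real)) \<Rightarrow> nat \<Rightarrow> (int \<Rightarrow> int \<Rightarrow> real) \<Rightarrow> real" where
  "avg_cost mx my ms Q \<sigma> T \<pi>0 = (1 / real T) * seq_cost mx my ms Q \<sigma> T [] \<pi>0"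

end

theory Submission imports Defs begin

lemma logsum:
  fixes \<alpha> \<gamma> :: "'i \<Rightarrow> real"
  assumes fin: "finite I" and an: "\<forall>i\<in>I. 0 \<le> \<alpha> i" and gn: "\<forall>i\<in>I. 0 \<le> \<gamma> i"
    and ag: "\<forall>i\<in>I. \<alpha> i > 0 \<longrightarrow> \<gamma> i > 0"
  shows "(if sum \<alpha> I = 0 then 0 else sum \<alpha> I * ln (sum \<alpha> I / sum \<gamma> I))
         \<le> (\<Sum>i\<in>I. if \<alpha> i = 0 then 0 else \<alpha> i * ln (\<alpha> i / \<gamma> i))"
proof (cases "sum \<alpha> I = 0")
  case True
  then have "\<forall>i\<in>I. \<alpha> i = 0" using sum_nonneg_eq_0_iff[OF fin] an by blast
  then show ?thesis using True by simp
next
  case False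
  define A where "A = sum \<alpha> I"
  define C where "C = sum \<gamma> I"
  have A0: "A > 0" using False an unfolding A_def by (simp add: sum_nonneg order_le_neq_trans)
  obtain j where j: "j \<in> I" "\<alpha> j \<noteq> 0" using False by (meson sum.not_neutral_contains_not_neutral)
  have "\<gamma> j > 0" using j an ag by force
  moreover have "\<gamma> j \<le> C" unfolding C_def using fin j(1) gn by (intro member_le_sum) auto
  ultimately have C0: "C > 0" by linarith
  have pt: "(if \<alpha> i = 0 then 0 else \<alpha> i * ln (\<alpha> i / \<gamma> i)) \<ge> \<alpha> i * ln (A / C) - \<gamma> i * (A / C) + \<alpha> i"
    if i: "i \<in> I" for i
  proof (cases "\<alpha> i = 0")
    case True then show ?thesis using gn i A0 C0 by simp
  next
    case False
    have ai: "\<alpha> i > 0" using False an i by force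
    have gi: "\<gamma> i > 0" using ai ag i by blast
    define r where "r = \<gamma> i * A / (\<alpha> i * C)"
    have r0: "r > 0" unfolding r_def using ai gi A0 C0 by simp
    have lr: "ln r = ln (\<gamma> i) + ln A - ln (\<alpha> i) - ln C"
      unfolding r_def using ai gi A0 C0 by (simp add: ln_div ln_mult)
    have "ln r \<le> r - 1" using ln_le_minus_one[OF r0] .
    then have "\<alpha> i * ln r \<le> \<alpha> i * (r - 1)" using ai by (simp add: mult_left_mono)
    moreover have "\<alpha> i * r = \<gamma> i * (A / C)" unfolding r_def using ai by (simp add: field_simps)
    moreover have "\<alpha> i * ln (\<alpha> i / \<gamma> i) = \<alpha> i * ln (A / C) - \<alpha> i * ln r"
    proof -
      have "ln (\<alpha> i / \<gamma> i) = ln (A / C) - ln r" using ai gi A0 C0 lr by (simp add: ln_div)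
      then show ?thesis by (simp add: right_diff_distrib)
    qed
    ultimately show ?thesis using False by (simp add: algebra_simps)
  qed
  have "(\<Sum>i\<in>I. \<alpha> i * ln (A / C) - \<gamma> i * (A / C) + \<alpha> i) = A * ln (A / C) - C * (A / C) + A"
    unfolding A_def C_def by (simp add: sum.distrib sum_subtractf sum_distrib_right sum_divide_distrib)
  also have "\<dots> = A * ln (A / C)" using C0 by simp
  finally have "A * ln (A / C) \<le> (\<Sum>i\<in>I. if \<alpha> i = 0 then 0 else \<alpha> i * ln (\<alpha> i / \<gamma> i))"
    using sum_mono[of I "\<lambda>i. \<alpha> i * ln (A / C) - \<gamma> i * (A / C) + \<alpha> i"] pt by force
  then show ?thesis using False unfolding A_def C_def by simp
qed


definition goodpi :: "nat \<Rightarrow> nat \<Rightarrow> (int \<Rightarrow> int \<Rightarrow> real) \<Rightarrow> bool" where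
  "goodpi mx ms \<pi> \<longleftrightarrow> (\<forall>x s. 0 \<le> \<pi> x s) \<and> (\<forall>x s. x \<notin> rng mx \<or> s \<notin> rng ms \<longrightarrow> \<pi> x s = 0)"

definition Nf :: "nat \<Rightarrow> nat \<Rightarrow> (int \<Rightarrow> int \<Rightarrow> int \<Rightarrow> real) \<Rightarrow> (int \<Rightarrow> int \<Rightarrow> real) \<Rightarrow> int \<Rightarrow> int \<Rightarrow> real" where
  "Nf mx ms a \<pi> y w = (\<Sum>x\<in>rng mx. \<Sum>s\<in>rng ms. if s - x = w then a y x s * \<pi> x s else 0)"

lemma finite_rng[simp]: "finite (rng m)" by (simp add: rng_def)

lemma W_mem: "x \<in> rng mx \<Longrightarrow> s \<in> rng ms \<Longrightarrow> s - x \<in> Wset mx ms"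
  unfolding Wset_def by blast

lemma finite_W[simp]: "finite (Wset mx ms)"
proof -
  have "Wset mx ms = (\<lambda>(s,x). s - x) ` (rng ms \<times> rng mx)" unfolding Wset_def by auto
  then show ?thesis by simp
qed

lemma Yo_sub: "Yo my ms w \<subseteq> rng my" unfolding Yo_def by auto

lemma finite_Yo[simp]: "finite (Yo my ms w)" using Yo_sub finite_rng by (rule finite_subset)

lemma pmf_sumY: "is_pmf_on (Yo my ms w) f \<Longrightarrow> sum f (rng my) = 1"
  unfolding is_pmf_on_def
  by (metis (no_types, lifting) Yo_sub finite_rng sum.mono_neutral_right Diff_iff)

lemma sum_prod: "(\<Sum>u\<in>A \<times> B. F u) = (\<Sum>x\<in>A. \<Sum>y\<in>B. F (x, y))"
  by (simp add: sum.cartesian_product)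

lemma swap3:
  fixes f :: "'c \<Rightarrow> 'a \<Rightarrow> 'b \<Rightarrow> 'r::comm_monoid_add"
  shows "(\<Sum>y\<in>C. \<Sum>x\<in>A. \<Sum>s\<in>B. f y x s) = (\<Sum>x\<in>A. \<Sum>s\<in>B. \<Sum>y\<in>C. f y x s)"
proof -
  have "(\<Sum>y\<in>C. \<Sum>x\<in>A. \<Sum>s\<in>B. f y x s) = (\<Sum>y\<in>C. \<Sum>(x,s)\<in>A \<times> B. f y x s)"
    by (simp add: sum.cartesian_product)
  also have "\<dots> = (\<Sum>(x,s)\<in>A \<times> B. \<Sum>y\<in>C. f y x s)"
    by (subst sum.swap) (simp add: split_beta)
  also have "\<dots> = (\<Sum>x\<in>A. \<Sum>s\<in>B. \<Sum>y\<in>C. f y x s)"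
    by (rule sum.cartesian_product[symmetric])
  finally show ?thesis .
qed

lemma fiber:
  "(\<Sum>x\<in>rng mx. \<Sum>s\<in>rng ms. f x s) =
   (\<Sum>w\<in>Wset mx ms. \<Sum>x\<in>rng mx. \<Sum>s\<in>rng ms. if s - x = w then f x s else 0)"
proof -
  have "(\<Sum>w\<in>Wset mx ms. \<Sum>x\<in>rng mx. \<Sum>s\<in>rng ms. if s - x = w then f x s else 0)
     = (\<Sum>x\<in>rng mx. \<Sum>s\<in>rng ms. \<Sum>w\<in>Wset mx ms. if s - x = w then f x s else 0)"
  proof -
    have "(\<Sum>w\<in>Wset mx ms. \<Sum>x\<in>rng mx. \<Sum>s\<in>rng ms. if s - x = w then f x s else 0)
      = (\<Sum>w\<in>Wset mx ms. \<Sum>(x,s)\<in>rng mx \<times> rng ms. if s - x = w then f x s else 0)"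
      by (simp add: sum.cartesian_product)
    also have "\<dots> = (\<Sum>(x,s)\<in>rng mx \<times> rng ms. \<Sum>w\<in>Wset mx ms. if s - x = w then f x s else 0)"
      by (subst sum.swap) (simp add: split_beta)
    also have "\<dots> = (\<Sum>x\<in>rng mx. \<Sum>s\<in>rng ms. \<Sum>w\<in>Wset mx ms. if s - x = w then f x s else 0)"
      by (simp add: sum.cartesian_product)
    finally show ?thesis .
  qed
  also have "\<dots> = (\<Sum>x\<in>rng mx. \<Sum>s\<in>rng ms. f x s)"
    by (intro sum.cong refl) (simp add: W_mem)
  finally show ?thesis by simp
qed

lemma mi_cong:
  assumes "\<forall>u\<in>U. (\<Sum>v\<in>V. J u v) = r u" and "\<forall>v\<in>V. (\<Sum>u\<in>U. J u v) = c v"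
  shows "mutual_info U V J = (\<Sum>u\<in>U. \<Sum>v\<in>V. if J u v = 0 then 0 else J u v * ln (J u v / (r u * c v)))"
  unfolding mutual_info_def using assms by (intro sum.cong refl) auto

lemma scale_term:
  fixes c t q :: real
  shows "(if c * t = 0 then 0 else c * t * ln (c * t / (c * q))) = c * (if t = 0 then 0 else t * ln (t / q))"
  by (cases "c = 0") auto


context
  fixes mx my ms :: nat and a :: "int \<Rightarrow> int \<Rightarrow> int \<Rightarrow> real"
    and \<pi> :: "int \<Rightarrow> int \<Rightarrow> real"
  assumes A: "actA mx my ms a" and G: "goodpi mx ms \<pi>"
begin

lemma pi_nn0: "0 \<le> \<pi> x s" using G unfolding goodpi_def by blast
lemma pi_out0: "x \<notin> rng mx \<or> s \<notin> rng ms \<Longrightarrow> \<pi> x s = 0" using G unfolding goodpi_def by blast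

lemma a_pmf0: "x \<in> rng mx \<Longrightarrow> s \<in> rng ms \<Longrightarrow> is_pmf_on (Yo my ms (s - x)) (\<lambda>y. a y x s)"
  using A unfolding actA_def by blast

lemma a_nn0: "x \<in> rng mx \<Longrightarrow> s \<in> rng ms \<Longrightarrow> 0 \<le> a y x s"
  using a_pmf0 unfolding is_pmf_on_def by blast

lemma a_out0: "x \<in> rng mx \<Longrightarrow> s \<in> rng ms \<Longrightarrow> y \<notin> Yo my ms (s - x) \<Longrightarrow> a y x s = 0"
  using a_pmf0 unfolding is_pmf_on_def by blast

lemma api_nn0: "0 \<le> a y x s * \<pi> x s"
proof (cases "x \<in> rng mx \<and> s \<in> rng ms")
  case True then show ?thesis using a_nn0 pi_nn0 by simp
next
  case False then show ?thesis using pi_out0 by auto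
qed

end

context
  fixes mx my ms :: nat and a :: "int \<Rightarrow> int \<Rightarrow> int \<Rightarrow> real"
    and \<pi> :: "int \<Rightarrow> int \<Rightarrow> real" and b :: "int \<Rightarrow> int \<Rightarrow> real"
  assumes A: "actA mx my ms a" and G: "goodpi mx ms \<pi>"
    and B1: "\<forall>w\<in>Wset mx ms. xi mx ms \<pi> w \<noteq> 0 \<longrightarrow>
           (\<forall>y. b y w = (\<Sum>x\<in>rng mx. \<Sum>s\<in>rng ms. if s - x = w then a y x s * \<pi> x s else 0)
                        / xi mx ms \<pi> w)"
    and B2: "\<forall>w\<in>Wset mx ms. xi mx ms \<pi> w = 0 \<longrightarrow> is_pmf_on (Yo my ms w) (\<lambda>y. b y w)"
begin

lemmas pi_nn = pi_nn0[OF A G]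
lemmas pi_out = pi_out0[OF A G]
lemmas a_pmf = a_pmf0[OF A G]
lemmas a_nn = a_nn0[OF A G]
lemmas a_out = a_out0[OF A G]
lemmas api_nn = api_nn0[OF A G]

lemma xi_nn: "0 \<le> xi mx ms \<pi> w"
  unfolding xi_def by (intro sum_nonneg) (simp add: pi_nn)

lemma N_nn: "0 \<le> Nf mx ms a \<pi> y w"
  unfolding Nf_def by (intro sum_nonneg) (simp add: api_nn)

lemma xi_zero:
  assumes "xi mx ms \<pi> w = 0" "x \<in> rng mx" "s \<in> rng ms" "s - x = w"
  shows "\<pi> x s = 0"
proof -
  have h: "\<forall>x\<in>rng mx. (\<Sum>s\<in>rng ms. if s - x = w then \<pi> x s else 0) = 0"
    using assms(1) unfolding xi_def
    by (subst (asm) sum_nonneg_eq_0_iff) (auto intro!: sum_nonneg simp: pi_nn)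
  then have "\<forall>s\<in>rng ms. (if s - x = w then \<pi> x s else 0) = 0"
    using assms(2) by (subst (asm) sum_nonneg_eq_0_iff) (auto simp: pi_nn)
  then show ?thesis using assms by auto
qed

lemma N_eq: "Nf mx ms a \<pi> y w = xi mx ms \<pi> w * b y w"
proof (cases "w \<in> Wset mx ms")
  case True
  show ?thesis
  proof (cases "xi mx ms \<pi> w = 0")
    case False
    then show ?thesis using B1 True unfolding Nf_def by simp
  next
    case z: True
    have "Nf mx ms a \<pi> y w = 0" unfolding Nf_def
      by (intro sum.neutral ballI) (auto simp: xi_zero[OF z])
    then show ?thesis using z by simp
  qed
next
  case False
  then have "\<And>x s. x \<in> rng mx \<Longrightarrow> s \<in> rng ms \<Longrightarrow> s - x \<noteq> w" using W_mem by blast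
  then have "Nf mx ms a \<pi> y w = 0" "xi mx ms \<pi> w = 0" unfolding Nf_def xi_def
    by (auto intro!: sum.neutral)
  then show ?thesis by simp
qed

lemma b_actB: "actB mx my ms b"
  unfolding actB_def
proof
  fix w assume w: "w \<in> Wset mx ms"
  show "is_pmf_on (Yo my ms w) (\<lambda>y. b y w)"
  proof (cases "xi mx ms \<pi> w = 0")
    case True then show ?thesis using B2 w by blast
  next
    case False
    have bw: "b y w = Nf mx ms a \<pi> y w / xi mx ms \<pi> w" for y
      using B1 w False unfolding Nf_def by simp
    have xp: "xi mx ms \<pi> w > 0" using xi_nn False by (simp add: order_le_neq_trans)
    have nn: "0 \<le> b y w" for y unfolding bw using N_nn xi_nn by simp
    have out: "b y w = 0" if "y \<notin> Yo my ms w" for y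
    proof -
      have "Nf mx ms a \<pi> y w = 0" unfolding Nf_def
        by (intro sum.neutral ballI) (auto simp: a_out that)
      then show ?thesis unfolding bw by simp
    qed
    have "(\<Sum>y\<in>Yo my ms w. Nf mx ms a \<pi> y w)
        = (\<Sum>x\<in>rng mx. \<Sum>s\<in>rng ms. \<Sum>y\<in>Yo my ms w. if s - x = w then a y x s * \<pi> x s else 0)"
      unfolding Nf_def by (rule swap3)
    also have "\<dots> = (\<Sum>x\<in>rng mx. \<Sum>s\<in>rng ms. if s - x = w then \<pi> x s else 0)"
    proof (intro sum.cong refl)
      fix x s assume xs: "x \<in> rng mx" "s \<in> rng ms"
      show "(\<Sum>y\<in>Yo my ms w. if s - x = w then a y x s * \<pi> x s else 0) = (if s - x = w then \<pi> x s else 0)"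
      proof (cases "s - x = w")
        case True
        then have "(\<Sum>y\<in>Yo my ms w. a y x s) = 1" using a_pmf[OF xs] unfolding is_pmf_on_def by simp
        then show ?thesis using True by (simp add: sum_distrib_right[symmetric])
      qed simp
    qed
    also have "\<dots> = xi mx ms \<pi> w" unfolding xi_def ..
    finally have "(\<Sum>y\<in>Yo my ms w. b y w) = 1" unfolding bw using False
      by (simp add: sum_divide_distrib[symmetric])
    then show ?thesis unfolding is_pmf_on_def using nn out by blast
  qed
qed

lemma at_actA: "actA mx my ms (\<lambda>y x s. b y (s - x))"
  unfolding actA_def using b_actB W_mem unfolding actB_def by blast


lemma fib_pt:
  "g (x + w) * \<pi> x (x + w) = (\<Sum>s\<in>rng ms. if s - x = w then g s * \<pi> x s else 0)"
proof -
  have "(\<Sum>s\<in>rng ms. if s - x = w then g s * \<pi> x s else 0)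
      = (\<Sum>s\<in>rng ms. if x + w = s then g s * \<pi> x s else 0)"
    by (intro sum.cong refl) auto
  also have "\<dots> = (if x + w \<in> rng ms then g (x + w) * \<pi> x (x + w) else 0)"
    by (simp add: sum.delta')
  finally show ?thesis using pi_out[of x "x + w"] by auto
qed

lemma xi_alt: "xi mx ms \<pi> w = (\<Sum>x\<in>rng mx. \<pi> x (x + w))"
proof -
  have "\<pi> x (x + w) = (\<Sum>s\<in>rng ms. if s - x = w then \<pi> x s else 0)" for x
    using fib_pt[of "\<lambda>_. 1" x w] by (simp cong: if_cong)
  then show ?thesis unfolding xi_def by simp
qed

lemma den_eq: "(\<Sum>x\<in>rng mx. \<Sum>s\<in>rng ms. a y x s * \<pi> x s) = (\<Sum>x\<in>rng mx. \<Sum>s\<in>rng ms. b y (s - x) * \<pi> x s)"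
proof -
  have "(\<Sum>x\<in>rng mx. \<Sum>s\<in>rng ms. a y x s * \<pi> x s) = (\<Sum>w\<in>Wset mx ms. Nf mx ms a \<pi> y w)"
    unfolding Nf_def by (rule fiber)
  also have "\<dots> = (\<Sum>w\<in>Wset mx ms. xi mx ms \<pi> w * b y w)" by (simp add: N_eq)
  also have "\<dots> = (\<Sum>w\<in>Wset mx ms. \<Sum>x\<in>rng mx. \<Sum>s\<in>rng ms. if s - x = w then b y (s - x) * \<pi> x s else 0)"
  proof (intro sum.cong refl)
    fix w
    have "(\<Sum>x\<in>rng mx. \<Sum>s\<in>rng ms. if s - x = w then b y (s - x) * \<pi> x s else 0)
       = (\<Sum>x\<in>rng mx. \<Sum>s\<in>rng ms. b y w * (if s - x = w then \<pi> x s else 0))"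
      by (intro sum.cong refl) auto
    also have "\<dots> = b y w * xi mx ms \<pi> w" unfolding xi_def by (simp add: sum_distrib_left)
    finally show "xi mx ms \<pi> w * b y w = (\<Sum>x\<in>rng mx. \<Sum>s\<in>rng ms. if s - x = w then b y (s - x) * \<pi> x s else 0)"
      by simp
  qed
  also have "\<dots> = (\<Sum>x\<in>rng mx. \<Sum>s\<in>rng ms. b y (s - x) * \<pi> x s)"
    by (rule fiber[symmetric])
  finally show ?thesis .
qed

lemma filt_eq: "filt mx ms (\<lambda>x' x. PX x') \<pi> y a = filt mx ms (\<lambda>x' x. PX x') \<pi> y (\<lambda>y x s. b y (s - x))"
proof (intro ext)
  fix x' s'
  define w where "w = s' - y"
  have e: "s' + x - y = x + w" for x unfolding w_def by simp
  have n1: "(\<Sum>x\<in>rng mx. PX x' * a y x (s' + x - y) * \<pi> x (s' + x - y)) = PX x' * Nf mx ms a \<pi> y w"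
    unfolding e Nf_def sum_distrib_left
    by (intro sum.cong refl) (simp add: fib_pt[of "a y _"] mult.assoc sum_distrib_left)
  have n2: "(\<Sum>x\<in>rng mx. PX x' * b y (s' + x - y - x) * \<pi> x (s' + x - y)) = PX x' * b y w * xi mx ms \<pi> w"
    unfolding e xi_alt by (simp add: sum_distrib_left mult.assoc)
  show "filt mx ms (\<lambda>x' x. PX x') \<pi> y a x' s' = filt mx ms (\<lambda>x' x. PX x') \<pi> y (\<lambda>y x s. b y (s - x)) x' s'"
    unfolding filt_def n1 n2 den_eq N_eq by simp
qed


definition "pp y = (\<Sum>x\<in>rng mx. \<Sum>s\<in>rng ms. \<pi> x s * a y x s)"

lemma pp_ge: "x \<in> rng mx \<Longrightarrow> s \<in> rng ms \<Longrightarrow> \<pi> x s * a y x s \<le> pp y"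
proof -
  assume xs: "x \<in> rng mx" "s \<in> rng ms"
  have nn: "0 \<le> \<pi> x s * a y x s" for x s using api_nn[of y x s] by (simp add: mult.commute)
  have "\<pi> x s * a y x s \<le> (\<Sum>s\<in>rng ms. \<pi> x s * a y x s)"
    using xs nn by (intro member_le_sum) auto
  also have "\<dots> \<le> pp y" unfolding pp_def using xs nn
    by (intro member_le_sum[where f = "\<lambda>x. \<Sum>s\<in>rng ms. \<pi> x s * a y x s"]) (auto intro: sum_nonneg)
  finally show ?thesis .
qed

lemma pp_N: "pp y = (\<Sum>w\<in>Wset mx ms. xi mx ms \<pi> w * b y w)"
proof -
  have "pp y = (\<Sum>x\<in>rng mx. \<Sum>s\<in>rng ms. a y x s * \<pi> x s)" unfolding pp_def by (simp add: mult.commute)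
  also have "\<dots> = (\<Sum>w\<in>Wset mx ms. Nf mx ms a \<pi> y w)" unfolding Nf_def by (rule fiber)
  finally show ?thesis by (simp add: N_eq)
qed

lemma pp_t: "pp y = (\<Sum>x\<in>rng mx. \<Sum>s\<in>rng ms. \<pi> x s * b y (s - x))"
  unfolding pp_def using den_eq[of y] by (simp add: mult.commute)

definition "Ta x s y = (if \<pi> x s * a y x s = 0 then 0 else \<pi> x s * a y x s * ln (\<pi> x s * a y x s / (\<pi> x s * pp y)))"
definition "Tt x s y = (if \<pi> x s * b y (s - x) = 0 then 0 else \<pi> x s * b y (s - x) * ln (\<pi> x s * b y (s - x) / (\<pi> x s * pp y)))"
definition "Tb w y = (if xi mx ms \<pi> w * b y w = 0 then 0 else xi mx ms \<pi> w * b y w * ln (xi mx ms \<pi> w * b y w / (xi mx ms \<pi> w * pp y)))"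

lemma MIA_form: "MI_A mx my ms a \<pi> = (\<Sum>y\<in>rng my. \<Sum>w\<in>Wset mx ms. \<Sum>x\<in>rng mx. \<Sum>s\<in>rng ms. if s - x = w then Ta x s y else 0)"
proof -
  have "MI_A mx my ms a \<pi> = (\<Sum>u\<in>rng mx \<times> rng ms. \<Sum>y\<in>rng my.
      if (\<lambda>(x,s) y. \<pi> x s * a y x s) u y = 0 then 0 else (\<lambda>(x,s) y. \<pi> x s * a y x s) u y *
        ln ((\<lambda>(x,s) y. \<pi> x s * a y x s) u y / ((\<lambda>(x,s). \<pi> x s) u * pp y)))"
    unfolding MI_A_def
  proof (rule mi_cong)
    show "\<forall>u\<in>rng mx \<times> rng ms. (\<Sum>y\<in>rng my. (\<lambda>(x,s) y. \<pi> x s * a y x s) u y) = (\<lambda>(x,s). \<pi> x s) u"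
      using pmf_sumY[OF a_pmf] by (auto simp: sum_distrib_left[symmetric])
    show "\<forall>y\<in>rng my. (\<Sum>u\<in>rng mx \<times> rng ms. (\<lambda>(x,s) y. \<pi> x s * a y x s) u y) = pp y"
      unfolding pp_def by (simp add: sum_prod)
  qed
  also have "\<dots> = (\<Sum>x\<in>rng mx. \<Sum>s\<in>rng ms. \<Sum>y\<in>rng my. Ta x s y)"
    unfolding sum_prod Ta_def by (simp cong: if_cong)
  also have "\<dots> = (\<Sum>y\<in>rng my. \<Sum>x\<in>rng mx. \<Sum>s\<in>rng ms. Ta x s y)"
    by (rule swap3[symmetric])
  also have "\<dots> = (\<Sum>y\<in>rng my. \<Sum>w\<in>Wset mx ms. \<Sum>x\<in>rng mx. \<Sum>s\<in>rng ms. if s - x = w then Ta x s y else 0)"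
    by (intro sum.cong refl fiber)
  finally show ?thesis .
qed

lemma MIT_form: "MI_A mx my ms (\<lambda>y x s. b y (s - x)) \<pi> = (\<Sum>y\<in>rng my. \<Sum>w\<in>Wset mx ms. \<Sum>x\<in>rng mx. \<Sum>s\<in>rng ms. if s - x = w then Tt x s y else 0)"
proof -
  have "MI_A mx my ms (\<lambda>y x s. b y (s - x)) \<pi> = (\<Sum>u\<in>rng mx \<times> rng ms. \<Sum>y\<in>rng my.
      if (\<lambda>(x,s) y. \<pi> x s * b y (s - x)) u y = 0 then 0 else (\<lambda>(x,s) y. \<pi> x s * b y (s - x)) u y *
        ln ((\<lambda>(x,s) y. \<pi> x s * b y (s - x)) u y / ((\<lambda>(x,s). \<pi> x s) u * pp y)))"
    unfolding MI_A_def
  proof (rule mi_cong)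
    have "x \<in> rng mx \<Longrightarrow> s \<in> rng ms \<Longrightarrow> (\<Sum>y\<in>rng my. b y (s - x)) = 1" for x s
      using b_actB W_mem pmf_sumY unfolding actB_def by blast
    then show "\<forall>u\<in>rng mx \<times> rng ms. (\<Sum>y\<in>rng my. (\<lambda>(x,s) y. \<pi> x s * b y (s - x)) u y) = (\<lambda>(x,s). \<pi> x s) u"
      by (auto simp: sum_distrib_left[symmetric])
    show "\<forall>y\<in>rng my. (\<Sum>u\<in>rng mx \<times> rng ms. (\<lambda>(x,s) y. \<pi> x s * b y (s - x)) u y) = pp y"
      unfolding pp_t by (simp add: sum_prod)
  qed
  also have "\<dots> = (\<Sum>x\<in>rng mx. \<Sum>s\<in>rng ms. \<Sum>y\<in>rng my. Tt x s y)"
    unfolding sum_prod Tt_def by (simp cong: if_cong)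
  also have "\<dots> = (\<Sum>y\<in>rng my. \<Sum>x\<in>rng mx. \<Sum>s\<in>rng ms. Tt x s y)"
    by (rule swap3[symmetric])
  also have "\<dots> = (\<Sum>y\<in>rng my. \<Sum>w\<in>Wset mx ms. \<Sum>x\<in>rng mx. \<Sum>s\<in>rng ms. if s - x = w then Tt x s y else 0)"
    by (intro sum.cong refl fiber)
  finally show ?thesis .
qed

lemma MIB_form: "MI_B mx my ms b (xi mx ms \<pi>) = (\<Sum>y\<in>rng my. \<Sum>w\<in>Wset mx ms. Tb w y)"
proof -
  have "MI_B mx my ms b (xi mx ms \<pi>) = (\<Sum>w\<in>Wset mx ms. \<Sum>y\<in>rng my. Tb w y)"
    unfolding MI_B_def Tb_def
  proof (rule mi_cong)
    show "\<forall>w\<in>Wset mx ms. (\<Sum>y\<in>rng my. xi mx ms \<pi> w * b y w) = xi mx ms \<pi> w"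
      using b_actB pmf_sumY unfolding actB_def by (auto simp: sum_distrib_left[symmetric])
    show "\<forall>y\<in>rng my. (\<Sum>w\<in>Wset mx ms. xi mx ms \<pi> w * b y w) = pp y"
      using pp_N by simp
  qed
  also have "\<dots> = (\<Sum>y\<in>rng my. \<Sum>w\<in>Wset mx ms. Tb w y)" by (rule sum.swap)
  finally show ?thesis .
qed


lemma per_ineq: "Tb w y \<le> (\<Sum>x\<in>rng mx. \<Sum>s\<in>rng ms. if s - x = w then Ta x s y else 0)"
proof -
  define \<alpha> where "\<alpha> = (\<lambda>(x,s). if s - x = w then \<pi> x s * a y x s else 0)"
  define \<gamma> where "\<gamma> = (\<lambda>(x,s). if s - x = w then \<pi> x s * pp y else 0)"
  have s\<alpha>: "sum \<alpha> (rng mx \<times> rng ms) = xi mx ms \<pi> w * b y w"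
    unfolding \<alpha>_def sum_prod N_eq[symmetric] Nf_def by (simp add: mult.commute cong: if_cong)
  have s\<gamma>: "sum \<gamma> (rng mx \<times> rng ms) = xi mx ms \<pi> w * pp y"
  proof -
    have "sum \<gamma> (rng mx \<times> rng ms) = (\<Sum>x\<in>rng mx. \<Sum>s\<in>rng ms. (if s - x = w then \<pi> x s else 0) * pp y)"
      unfolding \<gamma>_def sum_prod by (intro sum.cong refl) auto
    then show ?thesis unfolding xi_def by (simp add: sum_distrib_right)
  qed
  have tm: "(\<Sum>u\<in>rng mx \<times> rng ms. if \<alpha> u = 0 then 0 else \<alpha> u * ln (\<alpha> u / \<gamma> u))
      = (\<Sum>x\<in>rng mx. \<Sum>s\<in>rng ms. if s - x = w then Ta x s y else 0)"
    unfolding sum_prod \<alpha>_def \<gamma>_def Ta_def by (intro sum.cong refl) auto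
  have "(if sum \<alpha> (rng mx \<times> rng ms) = 0 then 0 else sum \<alpha> (rng mx \<times> rng ms) * ln (sum \<alpha> (rng mx \<times> rng ms) / sum \<gamma> (rng mx \<times> rng ms)))
      \<le> (\<Sum>u\<in>rng mx \<times> rng ms. if \<alpha> u = 0 then 0 else \<alpha> u * ln (\<alpha> u / \<gamma> u))"
  proof (rule logsum)
    show "finite (rng mx \<times> rng ms)" by simp
    have nn: "0 \<le> \<pi> x s * a y x s" for x s using api_nn[of y x s] by (simp add: mult.commute)
    have ppn: "0 \<le> pp y" unfolding pp_def using nn by (intro sum_nonneg) auto
    show "\<forall>i\<in>rng mx \<times> rng ms. 0 \<le> \<alpha> i" unfolding \<alpha>_def using nn by auto
    show "\<forall>i\<in>rng mx \<times> rng ms. 0 \<le> \<gamma> i" unfolding \<gamma>_def using pi_nn ppn by auto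
    show "\<forall>i\<in>rng mx \<times> rng ms. 0 < \<alpha> i \<longrightarrow> 0 < \<gamma> i"
    proof (intro ballI impI)
      fix i assume i: "i \<in> rng mx \<times> rng ms" and pos: "0 < \<alpha> i"
      obtain x s where xs: "i = (x, s)" by force
      have w: "s - x = w" and pa: "0 < \<pi> x s * a y x s" using pos unfolding xs \<alpha>_def by (auto split: if_splits)
      have "\<pi> x s \<noteq> 0" using pa by auto
      then have "\<pi> x s > 0" using pi_nn[of x s] by simp
      moreover have "pp y > 0" using pp_ge[of x s y] i xs pa by auto
      ultimately show "0 < \<gamma> i" unfolding xs \<gamma>_def using w by simp
    qed
  qed
  then show ?thesis unfolding s\<alpha> s\<gamma> tm Tb_def .
qed

lemma per_eq: "(\<Sum>x\<in>rng mx. \<Sum>s\<in>rng ms. if s - x = w then Tt x s y else 0) = Tb w y"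
proof -
  define L where "L = (if b y w = 0 then 0 else b y w * ln (b y w / pp y))"
  have "(\<Sum>x\<in>rng mx. \<Sum>s\<in>rng ms. if s - x = w then Tt x s y else 0)
      = (\<Sum>x\<in>rng mx. \<Sum>s\<in>rng ms. (if s - x = w then \<pi> x s else 0) * L)"
  proof (intro sum.cong refl)
    fix x s
    show "(if s - x = w then Tt x s y else 0) = (if s - x = w then \<pi> x s else 0) * L"
      unfolding Tt_def L_def using scale_term[of "\<pi> x s" "b y w" "pp y"] by auto
  qed
  also have "\<dots> = xi mx ms \<pi> w * L" unfolding xi_def by (simp add: sum_distrib_right)
  also have "\<dots> = Tb w y" unfolding Tb_def L_def using scale_term[of "xi mx ms \<pi> w" "b y w" "pp y"] by simp
  finally show ?thesis .
qed

lemma MI_ineq: "MI_A mx my ms (\<lambda>y x s. b y (s - x)) \<pi> \<le> MI_A mx my ms a \<pi>"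
  and MI_eq: "MI_A mx my ms (\<lambda>y x s. b y (s - x)) \<pi> = MI_B mx my ms b (xi mx ms \<pi>)"
proof -
  show e: "MI_A mx my ms (\<lambda>y x s. b y (s - x)) \<pi> = MI_B mx my ms b (xi mx ms \<pi>)"
    unfolding MIT_form MIB_form per_eq ..
  show "MI_A mx my ms (\<lambda>y x s. b y (s - x)) \<pi> \<le> MI_A mx my ms a \<pi>"
    unfolding e MIB_form MIA_form by (intro sum_mono per_ineq)
qed

end


definition b0 :: "int \<Rightarrow> int \<Rightarrow> real" where
  "b0 y w = (if y = max 0 (- w) then 1 else 0)"

definition Bc :: "nat \<Rightarrow> nat \<Rightarrow> (int \<Rightarrow> int \<Rightarrow> int \<Rightarrow> real) \<Rightarrow> (int \<Rightarrow> int \<Rightarrow> real) \<Rightarrow> int \<Rightarrow> int \<Rightarrow> real" where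
  "Bc mx ms a \<pi> y w = (if xi mx ms \<pi> w \<noteq> 0 then Nf mx ms a \<pi> y w / xi mx ms \<pi> w else b0 y w)"

fun belr :: "nat \<Rightarrow> nat \<Rightarrow> (int \<Rightarrow> real) \<Rightarrow> (int list \<Rightarrow> (int \<Rightarrow> int \<Rightarrow> int \<Rightarrow> real)) \<Rightarrow> (int \<Rightarrow> int \<Rightarrow> real)
    \<Rightarrow> int list \<Rightarrow> (int \<Rightarrow> int \<Rightarrow> real)" where
  "belr mx ms PX \<sigma> \<pi>0 [] = \<pi>0"
| "belr mx ms PX \<sigma> \<pi>0 (y # r) = filt mx ms (\<lambda>x' x. PX x') (belr mx ms PX \<sigma> \<pi>0 r) y (\<sigma> (rev r))"

lemma b0_pmf:
  assumes "mx \<le> my" "w \<in> Wset mx ms"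
  shows "is_pmf_on (Yo my ms w) (\<lambda>y. b0 y w)"
proof -
  obtain s x where sx: "w = s - x" "s \<in> rng ms" "x \<in> rng mx" using assms(2) unfolding Wset_def by blast
  have "max 0 (- w) \<in> Yo my ms w" using sx assms(1) unfolding Yo_def rng_def by auto
  then show ?thesis unfolding is_pmf_on_def b0_def by (auto simp: sum.delta)
qed

lemma good_XS: "is_pmf_XS mx ms \<pi> \<Longrightarrow> goodpi mx ms \<pi>"
  unfolding is_pmf_XS_def is_pmf_on_def goodpi_def by auto

lemma good_filt:
  assumes PX: "is_pmf_on (rng mx) PX" and A: "actA mx my ms a" and G: "goodpi mx ms \<pi>"
  shows "goodpi mx ms (filt mx ms (\<lambda>x' x. PX x') \<pi> y a)"
proof -
  have pxn: "0 \<le> PX x" for x using PX unfolding is_pmf_on_def by blast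
  have pxo: "x \<notin> rng mx \<Longrightarrow> PX x = 0" for x using PX unfolding is_pmf_on_def by blast
  have apn: "0 \<le> a y x s * \<pi> x s" for x s using api_nn0[OF A G] .
  have num_nn: "0 \<le> (\<Sum>x\<in>rng mx. PX x' * a y x (s' + x - y) * \<pi> x (s' + x - y))" for x' s'
    using pxn apn by (intro sum_nonneg) (simp add: mult.assoc)
  have den_nn: "0 \<le> (\<Sum>x\<in>rng mx. \<Sum>s\<in>rng ms. a y x s * \<pi> x s)"
    using apn by (intro sum_nonneg) auto
  have num_z: "(\<Sum>x\<in>rng mx. PX x' * a y x (s' + x - y) * \<pi> x (s' + x - y)) = 0"
    if "x' \<notin> rng mx \<or> s' \<notin> rng ms" for x' s'
  proof (intro sum.neutral ballI)
    fix x assume x: "x \<in> rng mx"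
    show "PX x' * a y x (s' + x - y) * \<pi> x (s' + x - y) = 0"
    proof (cases "x' \<in> rng mx")
      case False then show ?thesis using pxo by simp
    next
      case True
      then have s': "s' \<notin> rng ms" using that by blast
      show ?thesis
      proof (cases "s' + x - y \<in> rng ms")
        case False then show ?thesis using pi_out0[OF A G] by simp
      next
        case True
        have "y \<notin> Yo my ms (s' + x - y - x)" using s' unfolding Yo_def by auto
        then have "a y x (s' + x - y) = 0" using a_out0[OF A G x True] by blast
        then show ?thesis by simp
      qed
    qed
  qed
  show ?thesis unfolding goodpi_def filt_def
    using num_nn den_nn num_z by (auto intro: divide_nonneg_nonneg)
qed

lemma seq_le:
  assumes "\<And>h. MI_A mx my ms (\<sigma>' h) (bel h) \<le> MI_A mx my ms (\<sigma> h) (bel h)"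
    and "\<And>h y. (\<Sum>x\<in>rng mx. \<Sum>s\<in>rng ms. \<sigma>' h y x s * bel h x s) = (\<Sum>x\<in>rng mx. \<Sum>s\<in>rng ms. \<sigma> h y x s * bel h x s)"
    and "\<And>h y. 0 \<le> (\<Sum>x\<in>rng mx. \<Sum>s\<in>rng ms. \<sigma> h y x s * bel h x s)"
    and "\<And>h y. y \<in> rng my \<Longrightarrow> filt mx ms Q (bel h) y (\<sigma>' h) = bel (h @ [y])"
    and "\<And>h y. y \<in> rng my \<Longrightarrow> filt mx ms Q (bel h) y (\<sigma> h) = bel (h @ [y])"
  shows "seq_cost mx my ms Q \<sigma>' n h (bel h) \<le> seq_cost mx my ms Q \<sigma> n h (bel h)"
proof (induction n arbitrary: h)
  case 0 then show ?case by simp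
next
  case (Suc n)
  have "(\<Sum>y\<in>rng my. (\<Sum>x\<in>rng mx. \<Sum>s\<in>rng ms. \<sigma>' h y x s * bel h x s) *
          seq_cost mx my ms Q \<sigma>' n (h @ [y]) (filt mx ms Q (bel h) y (\<sigma>' h)))
     \<le> (\<Sum>y\<in>rng my. (\<Sum>x\<in>rng mx. \<Sum>s\<in>rng ms. \<sigma> h y x s * bel h x s) *
          seq_cost mx my ms Q \<sigma> n (h @ [y]) (filt mx ms Q (bel h) y (\<sigma> h)))"
  proof (intro sum_mono)
    fix y assume y: "y \<in> rng my"
    show "(\<Sum>x\<in>rng mx. \<Sum>s\<in>rng ms. \<sigma>' h y x s * bel h x s) *
          seq_cost mx my ms Q \<sigma>' n (h @ [y]) (filt mx ms Q (bel h) y (\<sigma>' h))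
     \<le> (\<Sum>x\<in>rng mx. \<Sum>s\<in>rng ms. \<sigma> h y x s * bel h x s) *
          seq_cost mx my ms Q \<sigma> n (h @ [y]) (filt mx ms Q (bel h) y (\<sigma> h))"
      unfolding assms(2) assms(4)[OF y] assms(5)[OF y]
      by (intro mult_left_mono Suc.IH assms(3))
  qed
  then show ?case using assms(1)[of h] by simp
qed

theorem lemma4:
  fixes mx my ms :: nat
    and PX :: "int \<Rightarrow> real"
    and a :: "int \<Rightarrow> int \<Rightarrow> int \<Rightarrow> real"
    and \<pi> :: "int \<Rightarrow> int \<Rightarrow> real"
    and b :: "int \<Rightarrow> int \<Rightarrow> real"
  assumes "mx \<le> my"
    and "is_pmf_on (rng mx) PX"
    and "actA mx my ms a"
    and "is_pmf_XS mx ms \<pi>"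
    and "\<forall>w\<in>Wset mx ms. xi mx ms \<pi> w \<noteq> 0 \<longrightarrow>
           (\<forall>y. b y w = (\<Sum>x\<in>rng mx. \<Sum>s\<in>rng ms. if s - x = w then a y x s * \<pi> x s else 0)
                        / xi mx ms \<pi> w)"
    and "\<forall>w\<in>Wset mx ms. xi mx ms \<pi> w = 0 \<longrightarrow> is_pmf_on (Yo my ms w) (\<lambda>y. b y w)"
  shows "actB mx my ms b
    \<and> actA mx my ms (\<lambda>y x s. b y (s - x))
    \<and> (\<forall>y\<in>rng my. filt mx ms (\<lambda>x' x. PX x') \<pi> y a
                  = filt mx ms (\<lambda>x' x. PX x') \<pi> y (\<lambda>y x s. b y (s - x)))
    \<and> MI_A mx my ms a \<pi> \<ge> MI_A mx my ms (\<lambda>y x s. b y (s - x)) \<pi>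
    \<and> MI_A mx my ms (\<lambda>y x s. b y (s - x)) \<pi> = MI_B mx my ms b (xi mx ms \<pi>)
    \<and> (\<forall>T \<pi>0 \<sigma>. T > 0 \<longrightarrow> is_pmf_XS mx ms \<pi>0 \<longrightarrow> (\<forall>h. actA mx my ms (\<sigma> h)) \<longrightarrow>
         (\<exists>\<sigma>'. (\<forall>h. \<exists>b'. actB mx my ms b' \<and> \<sigma>' h = (\<lambda>y x s. b' y (s - x)))
               \<and> (\<forall>h. actA mx my ms (\<sigma>' h))
               \<and> avg_cost mx my ms (\<lambda>x' x. PX x') \<sigma>' T \<pi>0
                   \<le> avg_cost mx my ms (\<lambda>x' x. PX x') \<sigma> T \<pi>0))"
proof -
  note core = assms(3) good_XS[OF assms(4)] assms(5) assms(6)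
  have seqp: "\<exists>\<sigma>'. (\<forall>h. \<exists>b'. actB mx my ms b' \<and> \<sigma>' h = (\<lambda>y x s. b' y (s - x)))
               \<and> (\<forall>h. actA mx my ms (\<sigma>' h))
               \<and> avg_cost mx my ms (\<lambda>x' x. PX x') \<sigma>' T \<pi>0
                   \<le> avg_cost mx my ms (\<lambda>x' x. PX x') \<sigma> T \<pi>0"
    if T: "T > 0" and p0: "is_pmf_XS mx ms \<pi>0" and As: "\<forall>h. actA mx my ms (\<sigma> h)" for T \<pi>0 \<sigma>
  proof -
    define bel where "bel h = belr mx ms PX \<sigma> \<pi>0 (rev h)" for h
    have bel_nil: "bel [] = \<pi>0" unfolding bel_def by simp
    have bel_snoc: "bel (h @ [y]) = filt mx ms (\<lambda>x' x. PX x') (bel h) y (\<sigma> h)" for h y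
      unfolding bel_def by simp
    have gb: "goodpi mx ms (bel h)" for h
    proof (induction h rule: rev_induct)
      case Nil then show ?case using bel_nil good_XS[OF p0] by simp
    next
      case (snoc y h) then show ?case unfolding bel_snoc using good_filt assms(2) As by blast
    qed
    define bb where "bb h = Bc mx ms (\<sigma> h) (bel h)" for h
    have B1h: "\<forall>w\<in>Wset mx ms. xi mx ms (bel h) w \<noteq> 0 \<longrightarrow>
           (\<forall>y. bb h y w = (\<Sum>x\<in>rng mx. \<Sum>s\<in>rng ms. if s - x = w then \<sigma> h y x s * bel h x s else 0)
                        / xi mx ms (bel h) w)" for h
      unfolding bb_def Bc_def Nf_def by simp
    have B2h: "\<forall>w\<in>Wset mx ms. xi mx ms (bel h) w = 0 \<longrightarrow> is_pmf_on (Yo my ms w) (\<lambda>y. bb h y w)" for h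
      unfolding bb_def Bc_def using b0_pmf[OF assms(1)] by simp
    note ch = As[rule_format] gb B1h B2h
    define \<sigma>' where "\<sigma>' h = (\<lambda>y x s. bb h y (s - x))" for h
    have c1: "\<forall>h. \<exists>b'. actB mx my ms b' \<and> \<sigma>' h = (\<lambda>y x s. b' y (s - x))"
      unfolding \<sigma>'_def using b_actB[OF ch] by blast
    have c2: "\<forall>h. actA mx my ms (\<sigma>' h)" unfolding \<sigma>'_def using at_actA[OF ch] by blast
    have "seq_cost mx my ms (\<lambda>x' x. PX x') \<sigma>' T [] (bel []) \<le> seq_cost mx my ms (\<lambda>x' x. PX x') \<sigma> T [] (bel [])"
    proof (rule seq_le)
      show "MI_A mx my ms (\<sigma>' h) (bel h) \<le> MI_A mx my ms (\<sigma> h) (bel h)" for h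
        unfolding \<sigma>'_def using MI_ineq[OF ch] by simp
      show "(\<Sum>x\<in>rng mx. \<Sum>s\<in>rng ms. \<sigma>' h y x s * bel h x s) = (\<Sum>x\<in>rng mx. \<Sum>s\<in>rng ms. \<sigma> h y x s * bel h x s)" for h y
        unfolding \<sigma>'_def using den_eq[OF ch] by simp
      show "0 \<le> (\<Sum>x\<in>rng mx. \<Sum>s\<in>rng ms. \<sigma> h y x s * bel h x s)" for h y
        using api_nn0[OF As[rule_format] gb] by (intro sum_nonneg) auto
      show "filt mx ms (\<lambda>x' x. PX x') (bel h) y (\<sigma>' h) = bel (h @ [y])" for h y
        unfolding \<sigma>'_def bel_snoc using filt_eq[OF ch] by simp
      show "filt mx ms (\<lambda>x' x. PX x') (bel h) y (\<sigma> h) = bel (h @ [y])" for h y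
        unfolding bel_snoc ..
    qed
    then have "avg_cost mx my ms (\<lambda>x' x. PX x') \<sigma>' T \<pi>0 \<le> avg_cost mx my ms (\<lambda>x' x. PX x') \<sigma> T \<pi>0"
      unfolding avg_cost_def bel_nil by (simp add: divide_right_mono)
    then show ?thesis using c1 c2 by blast
  qed
  show ?thesis
    using b_actB[OF core] at_actA[OF core] filt_eq[OF core] MI_ineq[OF core] MI_eq[OF core] seqp
    by blast
qed

end
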